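(* Let $\mathcal{G}\subseteq\mathbb{N}$ be a finite set with $0\in\mathcal{G}$, let $\lambda\in\mathbb{N}$, let $L=\max\mathcal{G}+\lambda$, and let $\mathcal{D}=\mathcal{G}\cup(\max\mathcal{G}-\mathcal{G}+\lambda)$. Then the following are equivalent: (i) $\mathcal{D}+\mathcal{D}=\{0,1,\ldots,2L\}$; (ii) $\mathcal{D}-\mathcal{D}=\{-L,\ldots,L\}$; (iii) both of the following conditions hold: (C1) $(\mathcal{G}-\mathcal{G})\cup(\mathcal{G}+\mathcal{G}-L)\cup(L-(\mathcal{G}+\mathcal{G}))\supseteq\{0,1,\ldots,\max\mathcal{G}\}$; (C2) $\mathcal{G}+\mathcal{G}\supseteq\{0,1,\ldots,\lambda-1\}$ (vacuous if $\lambda=0$).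
   Context: For sets $\mathcal{A},\mathcal{B}\subseteq\mathbb{Z}$ and $c\in\mathbb{Z}$: $\mathcal{A}+\mathcal{B}=\{a+b: a\in\mathcal{A},b\in\mathcal{B}\}$, $\mathcal{A}-\mathcal{B}=\{a-b\}$, $\mathcal{A}+c=\{a+c\}$, $c-\mathcal{A}=\{c-a\}$. The set $\mathcal{D}=\mathcal{G}\cup(\max\mathcal{G}-\mathcal{G}+\lambda)$ is called the symmetric array with generator $\mathcal{G}$ and shift $\lambda$ (S-$\mathcal{G}$); its aperture is $\max\mathcal{D}=L=\max\mathcal{G}+\lambda$. *)

theory Defs
  imports Main
begin

definition sumset :: "int set \<Rightarrow> int set \<Rightarrow> int set" where
  "sumset A B = {a + b | a b. a \<in> A \<and> b \<in> B}"

definition diffset :: "int set \<Rightarrow> int set \<Rightarrow> int set" where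
  "diffset A B = {a - b | a b. a \<in> A \<and> b \<in> B}"

definition shiftset :: "int set \<Rightarrow> int \<Rightarrow> int set" where
  "shiftset A c = {a + c | a. a \<in> A}"

definition reflset :: "int \<Rightarrow> int set \<Rightarrow> int set" where
  "reflset c A = {c - a | a. a \<in> A}"

definition symarray :: "int set \<Rightarrow> int \<Rightarrow> int set" where
  "symarray G lam = G \<union> shiftset (reflset (Max G) G) lam"

end

theory Submission
  imports Defs
begin

lemma mem_sumset: "x \<in> sumset A B \<longleftrightarrow> (\<exists>a\<in>A. \<exists>b\<in>B. x = a + b)"
  unfolding sumset_def by blast
lemma mem_diffset: "x \<in> diffset A B \<longleftrightarrow> (\<exists>a\<in>A. \<exists>b\<in>B. x = a - b)"
  unfolding diffset_def by blast
lemma mem_shiftset: "x \<in> shiftset A c \<longleftrightarrow> x - c \<in> A"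
  unfolding shiftset_def by force
lemma mem_reflset: "x \<in> reflset c A \<longleftrightarrow> c - x \<in> A"
  unfolding reflset_def by force

theorem mainTheorem3:
  fixes G :: "int set" and lam :: int
  assumes "finite G" and "0 \<in> G" and "\<forall>g\<in>G. 0 \<le> g" and "0 \<le> lam"
  defines "L \<equiv> Max G + lam"
  defines "D \<equiv> symarray G lam"
  shows "(sumset D D = {0..2*L} \<longleftrightarrow> diffset D D = {-L..L})
    \<and> (diffset D D = {-L..L} \<longleftrightarrow>
        (diffset G G \<union> shiftset (sumset G G) (-L) \<union> reflset L (sumset G G) \<supseteq> {0..Max G}
         \<and> sumset G G \<supseteq> {0..lam - 1}))"
proof -
  define M where "M = Max G"
  have gM: "\<And>g. g \<in> G \<Longrightarrow> g \<le> M" using assms(1) M_def by simp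
  have g0: "\<And>g. g \<in> G \<Longrightarrow> 0 \<le> g" using assms(3) by blast
  have LM: "L = M + lam" using L_def M_def by simp
  have Dm: "\<And>y. y \<in> D \<longleftrightarrow> y \<in> G \<or> L - y \<in> G"
    unfolding D_def symarray_def mem_shiftset mem_reflset Un_iff LM M_def
    by (auto simp: algebra_simps)
  have Dsym: "\<And>y. y \<in> D \<longleftrightarrow> L - y \<in> D" using Dm by auto
  have sd: "\<And>x. x \<in> sumset D D \<longleftrightarrow> x - L \<in> diffset D D"
  proof -
    fix x
    show "x \<in> sumset D D \<longleftrightarrow> x - L \<in> diffset D D"
      unfolding mem_sumset mem_diffset
    proof
      assume "\<exists>a\<in>D. \<exists>b\<in>D. x = a + b"
      then obtain a b where "a \<in> D" "b \<in> D" "x = a + b" by blast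
      then show "\<exists>a\<in>D. \<exists>b\<in>D. x - L = a - b"
        using Dsym[of b] by (intro bexI[of _ a] bexI[of _ "L - b"]) auto
    next
      assume "\<exists>a\<in>D. \<exists>b\<in>D. x - L = a - b"
      then obtain a b where "a \<in> D" "b \<in> D" "x - L = a - b" by blast
      then show "\<exists>a\<in>D. \<exists>b\<in>D. x = a + b"
        using Dsym[of b] by (intro bexI[of _ a] bexI[of _ "L - b"]) auto
    qed
  qed
  have part1: "sumset D D = {0..2*L} \<longleftrightarrow> diffset D D = {-L..L}"
  proof
    assume h: "sumset D D = {0..2*L}"
    show "diffset D D = {-L..L}"
    proof (rule set_eqI)
      fix y
      have "y \<in> diffset D D \<longleftrightarrow> y + L \<in> sumset D D" using sd[of "y + L"] by simp
      then show "y \<in> diffset D D \<longleftrightarrow> y \<in> {-L..L}" using h by auto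
    qed
  next
    assume h: "diffset D D = {-L..L}"
    show "sumset D D = {0..2*L}"
    proof (rule set_eqI)
      fix y
      show "y \<in> sumset D D \<longleftrightarrow> y \<in> {0..2*L}" using h sd[of y] by auto
    qed
  qed
  define S where "S = diffset G G \<union> shiftset (sumset G G) (-L) \<union> reflset L (sumset G G)"
  have Sm: "\<And>x. x \<in> S \<longleftrightarrow> (\<exists>a\<in>G. \<exists>b\<in>G. x = a - b \<or> x = a + b - L \<or> x = L - (a + b))"
    unfolding S_def Un_iff mem_diffset mem_shiftset mem_reflset mem_sumset
    by (auto simp: algebra_simps)
  have DS: "diffset D D = S"
  proof (rule set_eqI)
    fix x
    show "x \<in> diffset D D \<longleftrightarrow> x \<in> S"
    proof
      assume "x \<in> diffset D D"
      then obtain a b where ab: "a \<in> D" "b \<in> D" "x = a - b" unfolding mem_diffset by blast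
      from ab(1) have "a \<in> G \<or> L - a \<in> G" using Dm by blast
      moreover from ab(2) have "b \<in> G \<or> L - b \<in> G" using Dm by blast
      ultimately show "x \<in> S"
      proof (elim disjE)
        assume "a \<in> G" "b \<in> G" then show ?thesis using ab(3) unfolding Sm by blast
      next
        assume "a \<in> G" "L - b \<in> G"
        then show ?thesis using ab(3) unfolding Sm by (intro bexI[of _ a] bexI[of _ "L - b"]) auto
      next
        assume "L - a \<in> G" "b \<in> G"
        then show ?thesis using ab(3) unfolding Sm by (intro bexI[of _ "L - a"] bexI[of _ b]) auto
      next
        assume "L - a \<in> G" "L - b \<in> G"
        then show ?thesis using ab(3) unfolding Sm by (intro bexI[of _ "L - b"] bexI[of _ "L - a"]) auto
      qed
    next
      assume "x \<in> S"
      then obtain a b where ab: "a \<in> G" "b \<in> G" "x = a - b \<or> x = a + b - L \<or> x = L - (a + b)"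
        unfolding Sm by blast
      have aD: "a \<in> D" "b \<in> D" "L - a \<in> D" "L - b \<in> D" using ab Dm by auto
      from ab(3) show "x \<in> diffset D D"
      proof (elim disjE)
        assume "x = a - b" then show ?thesis unfolding mem_diffset using aD by blast
      next
        assume "x = a + b - L" then show ?thesis unfolding mem_diffset using aD
          by (intro bexI[of _ a] bexI[of _ "L - b"]) auto
      next
        assume "x = L - (a + b)" then show ?thesis unfolding mem_diffset using aD
          by (intro bexI[of _ "L - a"] bexI[of _ b]) auto
      qed
    qed
  qed
  have Ssym: "\<And>x. x \<in> S \<Longrightarrow> -x \<in> S"
  proof -
    fix x assume "x \<in> S"
    then obtain a b where ab: "a \<in> G" "b \<in> G" "x = a - b \<or> x = a + b - L \<or> x = L - (a + b)"
      unfolding Sm by blast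
    then show "-x \<in> S" unfolding Sm
      by (intro bexI[of _ b] bexI[of _ a]) (auto simp: algebra_simps)
  qed
  have Sb: "\<And>x. x \<in> S \<Longrightarrow> -L \<le> x \<and> x \<le> L"
  proof -
    fix x assume "x \<in> S"
    then obtain a b where ab: "a \<in> G" "b \<in> G" "x = a - b \<or> x = a + b - L \<or> x = L - (a + b)"
      unfolding Sm by blast
    have "a \<le> M" "b \<le> M" "0 \<le> a" "0 \<le> b" using ab gM g0 by auto
    then show "-L \<le> x \<and> x \<le> L" using ab(3) LM assms(4) by auto
  qed
  have eqv: "S = {-L..L} \<longleftrightarrow> {0..L} \<subseteq> S"
  proof
    assume "S = {-L..L}" then show "{0..L} \<subseteq> S" by auto
  next
    assume h: "{0..L} \<subseteq> S"
    show "S = {-L..L}"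
    proof (rule set_eqI)
      fix x
      show "x \<in> S \<longleftrightarrow> x \<in> {-L..L}"
      proof
        assume "x \<in> S" then show "x \<in> {-L..L}" using Sb by auto
      next
        assume x: "x \<in> {-L..L}"
        show "x \<in> S"
        proof (cases "0 \<le> x")
          case True then show ?thesis using h x by auto
        next
          case False
          then have "-x \<in> S" using h x by auto
          then show ?thesis using Ssym[of "-x"] by simp
        qed
      qed
    qed
  qed
  have part2: "{0..L} \<subseteq> S \<longleftrightarrow> ({0..M} \<subseteq> S \<and> {0..lam - 1} \<subseteq> sumset G G)"
  proof
    assume h: "{0..L} \<subseteq> S"
    have "{0..M} \<subseteq> S" using h LM assms(4) by auto
    moreover have "{0..lam - 1} \<subseteq> sumset G G"
    proof
      fix k assume k: "k \<in> {0..lam - 1}"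
      then have "L - k \<in> {0..L}" using LM gM assms(2) by force
      then have "L - k \<in> S" using h by blast
      then obtain a b where ab: "a \<in> G" "b \<in> G"
          "L - k = a - b \<or> L - k = a + b - L \<or> L - k = L - (a + b)"
        unfolding Sm by blast
      have "a \<le> M" "b \<le> M" "0 \<le> a" "0 \<le> b" using ab gM g0 by auto
      then have "k = a + b" using ab(3) k LM by auto
      then show "k \<in> sumset G G" unfolding mem_sumset using ab by blast
    qed
    ultimately show "{0..M} \<subseteq> S \<and> {0..lam - 1} \<subseteq> sumset G G" by blast
  next
    assume h: "{0..M} \<subseteq> S \<and> {0..lam - 1} \<subseteq> sumset G G"
    show "{0..L} \<subseteq> S"
    proof
      fix x assume x: "x \<in> {0..L}"
      show "x \<in> S"
      proof (cases "x \<le> M")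
        case True then show ?thesis using h x by auto
      next
        case False
        then have "L - x \<in> sumset G G" using h x LM by auto
        then obtain a b where "a \<in> G" "b \<in> G" "L - x = a + b" unfolding mem_sumset by blast
        then show ?thesis unfolding Sm by (intro bexI[of _ a] bexI[of _ b]) auto
      qed
    qed
  qed
  show ?thesis using part1 part2 eqv DS unfolding S_def M_def by simp
qed

end
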